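(* Let $\|\cdot\|$ be a norm on $\mathbb{R}^d$. For each integer $m>2$ let $E_m=\{T\subseteq\mathbb{R}^d\mid |T|=m \text{ and } T \text{ contains two points } x,y \text{ with } \|x-y\|=1\}$ and $\mathcal{G}_m=(\mathbb{R}^d,E_m)$. Then $\chi(\mathcal{G}_m)=\chi((\mathbb{R}^d,\|\cdot\|),1)$ for all such $m$.
   Context: $\chi((\mathbb{R}^d,\|\cdot\|),1)$ denotes the chromatic number of the unit distance graph of $(\mathbb{R}^d,\|\cdot\|)$, i.e. the graph on $\mathbb{R}^d$ whose edges are the pairs $\{x,y\}$ with $\|x-y\|=1$. A hypergraph $(V,E)$ has edges that are subsets of $V$ of size at least $2$; a proper coloring makes no edge monochromatic; $\chi$ is the least number of colors of a proper coloring. *)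

theory Defs
  imports "HOL-Analysis.Analysis" "HOL-Library.Extended_Nat"
begin

definition is_norm :: "('a::real_vector \<Rightarrow> real) \<Rightarrow> bool" where
  "is_norm N \<longleftrightarrow>
     (\<forall>x. N x = 0 \<longleftrightarrow> x = 0) \<and>
     (\<forall>a x. N (a *\<^sub>R x) = \<bar>a\<bar> * N x) \<and>
     (\<forall>x y. N (x + y) \<le> N x + N y)"

definition hyp_proper_coloring :: "'a set \<Rightarrow> 'a set set \<Rightarrow> ('a \<Rightarrow> 'c) \<Rightarrow> bool" where
  "hyp_proper_coloring V E c \<longleftrightarrow> (\<forall>e\<in>E. \<not> (\<exists>k. \<forall>x\<in>e. c x = k))"

definition hyp_chromatic_number :: "'a set \<Rightarrow> 'a set set \<Rightarrow> enat" where
  "hyp_chromatic_number V E =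
     (if \<exists>k::nat. \<exists>c::'a \<Rightarrow> nat. (\<forall>x\<in>V. c x < k) \<and> hyp_proper_coloring V E c
      then enat (LEAST k::nat. \<exists>c::'a \<Rightarrow> nat. (\<forall>x\<in>V. c x < k) \<and> hyp_proper_coloring V E c)
      else \<infinity>)"

definition unit_distance_chromatic_number :: "('a::real_vector \<Rightarrow> real) \<Rightarrow> enat" where
  "unit_distance_chromatic_number N =
     (if \<exists>k::nat. \<exists>c::'a \<Rightarrow> nat. (\<forall>x. c x < k) \<and> (\<forall>x y. N (x - y) = 1 \<longrightarrow> c x \<noteq> c y)
      then enat (LEAST k::nat. \<exists>c::'a \<Rightarrow> nat. (\<forall>x. c x < k) \<and>
                                 (\<forall>x y. N (x - y) = 1 \<longrightarrow> c x \<noteq> c y))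
      else \<infinity>)"

definition unit_hyperedges :: "('a::real_vector \<Rightarrow> real) \<Rightarrow> nat \<Rightarrow> 'a set set" where
  "unit_hyperedges N m = {T. finite T \<and> card T = m \<and> (\<exists>x\<in>T. \<exists>y\<in>T. N (x - y) = 1)}"

end

theory Submission
  imports Defs
begin

lemma norm0: "is_norm N \<Longrightarrow> N 0 = 0"
  unfolding is_norm_def by blast

lemma class_finite:
  fixes N :: "'a::real_vector \<Rightarrow> real"
  assumes nN: "is_norm N" and m: "m \<ge> 2"
    and hc: "hyp_proper_coloring V (unit_hyperedges N m) c"
    and xy: "N (x - y) = 1" and cxy: "c y = c x"
  shows "finite {u. c u = c x}"
proof (rule ccontr)
  assume inf: "infinite {u. c u = c x}"
  have neq: "x \<noteq> y" using xy norm0[OF nN] by auto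
  have "infinite ({u. c u = c x} - {x, y})" using inf by auto
  then obtain T where T: "finite T" "card T = m - 2" "T \<subseteq> {u. c u = c x} - {x, y}"
    using infinite_arbitrarily_large by blast
  let ?T = "insert x (insert y T)"
  have "x \<notin> T" "y \<notin> T" using T by auto
  hence "card ?T = Suc (Suc (card T))" using T neq by simp
  hence "card ?T = m" using T m by simp
  hence "?T \<in> unit_hyperedges N m" using T xy unfolding unit_hyperedges_def by auto
  moreover have "\<forall>u\<in>?T. c u = c x" using T cxy by auto
  ultimately show False using hc unfolding hyp_proper_coloring_def by blast
qed

lemma inf_univ: "infinite (UNIV :: (real ^ 'd) set)"
proof
  assume "finite (UNIV :: (real ^ 'd) set)"
  hence "finite (range (vec :: real \<Rightarrow> real ^ 'd))" by (rule finite_subset[rotated]) auto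
  moreover have "inj (vec :: real \<Rightarrow> real ^ 'd)" by (auto simp: inj_on_def vec_eq_iff)
  ultimately have "finite (UNIV :: real set)" using finite_imageD by blast
  thus False using infinite_UNIV_char_0 by blast
qed

lemma finite_part:
  fixes N :: "real ^ 'd \<Rightarrow> real"
  assumes nN: "is_norm N" and m: "m \<ge> 2"
    and hc: "hyp_proper_coloring V (unit_hyperedges N m) c"
    and ck: "\<forall>x. c x < (k::nat)" and F: "finite F"
  shows "\<exists>g. (\<forall>x. g x < k) \<and> (\<forall>x\<in>F. \<forall>y\<in>F. N (x - y) = 1 \<longrightarrow> g x \<noteq> g y)"
proof -
  define B where "B = {z. \<exists>w. N (z - w) = 1 \<and> c w = c z}"
  have fin: "finite {u. c u = c z}" if "z \<in> B" for z
    using that class_finite[OF nN m hc] unfolding B_def by blast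
  have "B \<subseteq> (\<Union>z\<in>B. {u. c u = c z})" by auto
  also have "(\<Union>z\<in>B. {u. c u = c z}) = (\<Union>a\<in>c ` B. {u. c u = a})" by auto
  finally have "B \<subseteq> (\<Union>a\<in>c ` B. {u. c u = a})" .
  moreover have "finite (c ` B)" using ck by (rule_tac finite_subset[of _ "{..<k}"]) auto
  moreover have "\<forall>a\<in>c ` B. finite {u. c u = a}" using fin by auto
  ultimately have fB: "finite B" by (meson finite_UN_I finite_subset)
  have "finite ((\<lambda>(b, f). b - f) ` (B \<times> F))" using fB F by auto
  then obtain t where t: "t \<notin> (\<lambda>(b, f). b - f) ` (B \<times> F)"
    using ex_new_if_finite[OF inf_univ] by blast
  show ?thesis
  proof (intro exI[of _ "\<lambda>u. c (u + t)"] conjI ballI impI allI)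
    show "c (x + t) < k" for x using ck by auto
    fix x y assume xF: "x \<in> F" and "y \<in> F" and u: "N (x - y) = 1"
    show "c (x + t) \<noteq> c (y + t)"
    proof
      assume "c (x + t) = c (y + t)"
      hence "x + t \<in> B" unfolding B_def using u
        by (rule_tac CollectI, rule_tac exI[of _ "y + t"]) auto
      hence "t \<in> (\<lambda>(b, f). b - f) ` (B \<times> F)" using xF
        by (rule_tac image_eqI[of _ _ "(x + t, x)"]) auto
      thus False using t by blast
    qed
  qed
qed

lemma compactness:
  fixes P :: "('a \<times> 'a) set" and k :: nat
  assumes fin: "\<And>Q. Q \<subseteq> P \<Longrightarrow> finite Q \<Longrightarrow> \<exists>g. (\<forall>x. g x < k) \<and> (\<forall>p\<in>Q. g (fst p) \<noteq> g (snd p))"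
  shows "\<exists>g. (\<forall>x. g x < k) \<and> (\<forall>p\<in>P. g (fst p) \<noteq> g (snd p))"
proof -
  define X where "X = product_topology (\<lambda>_::'a. discrete_topology {..<k}) UNIV"
  have ts: "topspace X = {g. \<forall>x. g x < k}"
    unfolding X_def by (auto simp: PiE_UNIV_domain Pi_iff)
  have cs: "compact_space X"
    unfolding X_def by (simp add: compact_space_product_topology compact_space_discrete_topology)
  have proj: "continuous_map X (discrete_topology {..<k}) (\<lambda>g. g a)" for a
    unfolding X_def by (rule continuous_map_product_projection) simp
  have op1: "openin X {g \<in> topspace X. g a = j}" if "j < k" for a j
  proof -
    have "openin X {g \<in> topspace X. g a \<in> {j}}"
      by (rule openin_continuous_map_preimage[OF proj]) (use that in auto)
    then show ?thesis by simp
  qed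
  define C where "C p = {g \<in> topspace X. g (fst p) \<noteq> g (snd p)}" for p
  have clC: "closedin X (C p)" for p
  proof -
    have eq: "{g \<in> topspace X. g (fst p) = g (snd p)} =
      (\<Union>j\<in>{..<k}. {g \<in> topspace X. g (fst p) = j} \<inter> {g \<in> topspace X. g (snd p) = j})"
      by (auto simp: ts)
    have "openin X {g \<in> topspace X. g (fst p) = g (snd p)}"
      unfolding eq
    proof (rule openin_Union)
      fix S assume "S \<in> (\<lambda>j. {g \<in> topspace X. g (fst p) = j} \<inter> {g \<in> topspace X. g (snd p) = j}) ` {..<k}"
      then obtain j where "j < k" and S: "S = {g \<in> topspace X. g (fst p) = j} \<inter> {g \<in> topspace X. g (snd p) = j}"
        by auto
      then show "openin X S" using op1 by (simp only: S openin_Int)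
    qed
    moreover have "C p = topspace X - {g \<in> topspace X. g (fst p) = g (snd p)}"
      unfolding C_def by auto
    ultimately show ?thesis by (simp add: closedin_diff)
  qed
  define U where "U = insert (topspace X) (C ` P)"
  have fip: "\<And>V. (\<forall>c\<in>V. closedin X c) \<Longrightarrow> (\<forall>F. finite F \<and> F \<subseteq> V \<longrightarrow> \<Inter>F \<noteq> {}) \<Longrightarrow> \<Inter>V \<noteq> {}"
    using cs unfolding compact_space_fip by blast
  have A: "\<forall>c\<in>U. closedin X c" unfolding U_def using clC closedin_topspace by blast
  have B: "\<forall>F. finite F \<and> F \<subseteq> U \<longrightarrow> \<Inter>F \<noteq> {}"
  proof (intro allI impI)
    fix F assume F: "finite F \<and> F \<subseteq> U"
    then have sub: "F - {topspace X} \<subseteq> C ` P" unfolding U_def by blast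
    have "finite (F - {topspace X})" using F by blast
    from finite_subset_image[OF this sub] obtain Q where Q: "Q \<subseteq> P" "finite Q" "F - {topspace X} = C ` Q"
      by blast
    then obtain g where g: "\<forall>x. g x < k" "\<forall>p\<in>Q. g (fst p) \<noteq> g (snd p)" using fin[OF Q(1) Q(2)] by blast
    have gts: "g \<in> topspace X" by (simp add: ts g(1))
    have "g \<in> \<Inter>F"
    proof
      fix S assume "S \<in> F"
      then have "S = topspace X \<or> S \<in> C ` Q" using Q(3) by blast
      then show "g \<in> S"
      proof
        assume "S \<in> C ` Q"
        then obtain p where "p \<in> Q" "S = C p" by blast
        then show "g \<in> S" using g(2) gts unfolding C_def by blast
      qed (use gts in blast)
    qed
    then show "\<Inter>F \<noteq> {}" by blast
  qed
  obtain g where g: "g \<in> \<Inter>U" using fip[OF A B] by blast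
  then have "g \<in> topspace X" unfolding U_def by blast
  then have "\<forall>x. g x < k" by (simp add: ts)
  moreover have "\<forall>p\<in>P. g (fst p) \<noteq> g (snd p)"
  proof
    fix p assume "p \<in> P"
    then have "g \<in> C p" using g unfolding U_def by blast
    then show "g (fst p) \<noteq> g (snd p)" unfolding C_def by blast
  qed
  ultimately show ?thesis by blast
qed

theorem corollary4p4p1:
  fixes N :: "real ^ 'd \<Rightarrow> real" and m :: nat
  assumes "is_norm N"
    and "m > 2"
  shows "hyp_chromatic_number (UNIV :: (real ^ 'd) set) (unit_hyperedges N m)
           = unit_distance_chromatic_number N"
proof -
  have eqv: "(\<exists>c::real ^ 'd \<Rightarrow> nat. (\<forall>x\<in>UNIV. c x < k) \<and> hyp_proper_coloring UNIV (unit_hyperedges N m) c)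
    \<longleftrightarrow> (\<exists>c::real ^ 'd \<Rightarrow> nat. (\<forall>x. c x < k) \<and> (\<forall>x y. N (x - y) = 1 \<longrightarrow> c x \<noteq> c y))" for k
  proof
    assume "\<exists>c::real ^ 'd \<Rightarrow> nat. (\<forall>x\<in>UNIV. c x < k) \<and> hyp_proper_coloring UNIV (unit_hyperedges N m) c"
    then obtain c :: "real ^ 'd \<Rightarrow> nat" where c: "\<forall>x. c x < k" "hyp_proper_coloring UNIV (unit_hyperedges N m) c"
      by auto
    have "\<exists>g. (\<forall>x. g x < k) \<and> (\<forall>p\<in>{p. N (fst p - snd p) = 1}. g (fst p) \<noteq> g (snd p))"
    proof (rule compactness)
      fix Q :: "((real ^ 'd) \<times> (real ^ 'd)) set" assume Q: "Q \<subseteq> {p. N (fst p - snd p) = 1}" "finite Q"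
      obtain g where g: "\<forall>x. g x < k" "\<forall>x\<in>fst ` Q \<union> snd ` Q. \<forall>y\<in>fst ` Q \<union> snd ` Q. N (x - y) = 1 \<longrightarrow> g x \<noteq> g y"
        using finite_part[OF assms(1) _ c(2) c(1), of "fst ` Q \<union> snd ` Q"] assms(2) Q(2) by auto
      show "\<exists>g. (\<forall>x. g x < k) \<and> (\<forall>p\<in>Q. g (fst p) \<noteq> g (snd p))"
      proof (intro exI[of _ g] conjI ballI)
        show "\<forall>x. g x < k" using g(1) .
        fix p assume pQ: "p \<in> Q"
        have "fst p \<in> fst ` Q \<union> snd ` Q" "snd p \<in> fst ` Q \<union> snd ` Q" using pQ by auto
        moreover have "N (fst p - snd p) = 1" using pQ Q(1) by auto
        ultimately show "g (fst p) \<noteq> g (snd p)" using g(2) by blast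
      qed
    qed
    then show "\<exists>c::real ^ 'd \<Rightarrow> nat. (\<forall>x. c x < k) \<and> (\<forall>x y. N (x - y) = 1 \<longrightarrow> c x \<noteq> c y)"
      by auto
  next
    assume "\<exists>c::real ^ 'd \<Rightarrow> nat. (\<forall>x. c x < k) \<and> (\<forall>x y. N (x - y) = 1 \<longrightarrow> c x \<noteq> c y)"
    then obtain c :: "real ^ 'd \<Rightarrow> nat" where c: "\<forall>x. c x < k" "\<forall>x y. N (x - y) = 1 \<longrightarrow> c x \<noteq> c y"
      by auto
    have "hyp_proper_coloring UNIV (unit_hyperedges N m) c"
      unfolding hyp_proper_coloring_def
    proof (intro ballI notI)
      fix e assume "e \<in> unit_hyperedges N m" and "\<exists>j. \<forall>x\<in>e. c x = j"
      then obtain x y j where "x \<in> e" "y \<in> e" "N (x - y) = 1" "\<forall>x\<in>e. c x = j"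
        unfolding unit_hyperedges_def by blast
      then show False using c(2) by metis
    qed
    then show "\<exists>c::real ^ 'd \<Rightarrow> nat. (\<forall>x\<in>UNIV. c x < k) \<and> hyp_proper_coloring UNIV (unit_hyperedges N m) c"
      using c(1) by auto
  qed
  show ?thesis
    unfolding hyp_chromatic_number_def unit_distance_chromatic_number_def eqv by simp
qed

end
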